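(* Let $p>1$. For any feasible $\mathbf b$-flow $\mathbf f$, we have $\mathcal E(\mathbf f)\ge\frac1p\left(\frac{\|\mathbf b\|_\infty}n\right)^p\|\mathbf r\|_{-\infty}$.
   Context: $G=(V,E)$ is a simple undirected graph with $n$ vertices, weights $r(e)>0$, and fixed orientation $\vec E$ (with $f(j,i)=-f(i,j)$). $\mathbf b\in\mathbb R^V$ with $\sum_ib(i)=0$; a $\mathbf b$-flow has net outflow $b(i)$ at every vertex $i$. $\mathcal E(\mathbf f)=\frac1p\sum_{e\in\vec E}r(e)|f(e)|^p$. For a vector $\mathbf v$, $\|\mathbf v\|_\infty=\max_i|v(i)|$ and $\|\mathbf v\|_{-\infty}=\min_i|v(i)|$. *)

theory Defs
  imports Complex_Main
begin

text \<open>A simple undirected graph on the finite vertex set V, given by a fixed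
orientation: E is the set of oriented edges (i,j); each undirected edge appears
in exactly one direction, and there are no loops.\<close>
definition oriented_simple_graph :: "'a set \<Rightarrow> ('a \<times> 'a) set \<Rightarrow> bool" where
  "oriented_simple_graph V E \<longleftrightarrow> finite V \<and> E \<subseteq> V \<times> V \<and>
     (\<forall>i. (i, i) \<notin> E) \<and> (\<forall>i j. (i, j) \<in> E \<longrightarrow> (j, i) \<notin> E)"

text \<open>Net outflow of f at vertex i (f(j,i) = - f(i,j) for the reverse direction).\<close>
definition net_outflow :: "('a \<times> 'a) set \<Rightarrow> ('a \<times> 'a \<Rightarrow> real) \<Rightarrow> 'a \<Rightarrow> real" where
  "net_outflow E f i = (\<Sum>e\<in>{e\<in>E. fst e = i}. f e) - (\<Sum>e\<in>{e\<in>E. snd e = i}. f e)"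

definition is_b_flow :: "'a set \<Rightarrow> ('a \<times> 'a) set \<Rightarrow> ('a \<Rightarrow> real) \<Rightarrow> ('a \<times> 'a \<Rightarrow> real) \<Rightarrow> bool" where
  "is_b_flow V E b f \<longleftrightarrow> (\<forall>i\<in>V. net_outflow E f i = b i)"

definition energy :: "real \<Rightarrow> ('a \<times> 'a) set \<Rightarrow> ('a \<times> 'a \<Rightarrow> real) \<Rightarrow> ('a \<times> 'a \<Rightarrow> real) \<Rightarrow> real" where
  "energy p E r f = (1 / p) * (\<Sum>e\<in>E. r e * \<bar>f e\<bar> powr p)"

definition inf_norm :: "'b set \<Rightarrow> ('b \<Rightarrow> real) \<Rightarrow> real" where
  "inf_norm I v = Max ((\<lambda>i. \<bar>v i\<bar>) ` I)"

definition neg_inf_norm :: "'b set \<Rightarrow> ('b \<Rightarrow> real) \<Rightarrow> real" where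
  "neg_inf_norm I v = Min ((\<lambda>i. \<bar>v i\<bar>) ` I)"

end

theory Submission
  imports Defs
begin

theorem mainTheorem19:
  fixes V :: "'a set" and E :: "('a \<times> 'a) set" and r f :: "'a \<times> 'a \<Rightarrow> real"
    and b :: "'a \<Rightarrow> real" and p :: real
  assumes "oriented_simple_graph V E"
    and "\<forall>e\<in>E. r e > 0"
    and "(\<Sum>i\<in>V. b i) = 0"
    and "p > 1"
    and "is_b_flow V E b f"
  shows "energy p E r f \<ge>
           (1 / p) * (inf_norm V b / real (card V)) powr p * neg_inf_norm E r"
proof -
  have finV: "finite V" and EV: "E \<subseteq> V \<times> V" and noloop: "\<And>i. (i,i) \<notin> E"
    and anti: "\<And>i j. (i,j) \<in> E \<Longrightarrow> (j,i) \<notin> E"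
    using assms(1) unfolding oriented_simple_graph_def by auto
  have finE: "finite E" using finV EV finite_subset by (metis finite_SigmaI)
  have p0: "p > 0" using assms(4) by simp
  have en_nonneg: "energy p E r f \<ge> 0"
    unfolding energy_def using assms(2) p0
    by (intro mult_nonneg_nonneg sum_nonneg) (auto intro: less_imp_le)
  show ?thesis
  proof (cases "V = {}")
    case True
    then show ?thesis using en_nonneg p0 by simp
  next
    case Vne: False
    obtain i where iV: "i \<in> V" and bi: "inf_norm V b = \<bar>b i\<bar>"
    proof -
      have "Max ((\<lambda>i. \<bar>b i\<bar>) ` V) \<in> (\<lambda>i. \<bar>b i\<bar>) ` V"
        using finV Vne by (intro Max_in) auto
      then show ?thesis using that unfolding inf_norm_def by auto
    qed
    show ?thesis
    proof (cases "b i = 0")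
      case True
      then show ?thesis using bi en_nonneg p0 by simp
    next
      case bnz: False
      define A where "A = {e\<in>E. fst e = i}"
      define B where "B = {e\<in>E. snd e = i}"
      define inc where "inc = A \<union> B"
      have finA: "finite A" "finite B" "finite inc" using finE unfolding A_def B_def inc_def by auto
      have disj: "A \<inter> B = {}" unfolding A_def B_def using noloop
        by auto
      have bi_eq: "b i = sum f A - sum f B"
        using assms(5) iV unfolding is_b_flow_def net_outflow_def A_def B_def by auto
      have "\<bar>b i\<bar> \<le> \<bar>sum f A\<bar> + \<bar>sum f B\<bar>" using bi_eq by simp
      also have "\<dots> \<le> (\<Sum>e\<in>A. \<bar>f e\<bar>) + (\<Sum>e\<in>B. \<bar>f e\<bar>)"
        by (intro add_mono sum_abs)
      also have "\<dots> = (\<Sum>e\<in>inc. \<bar>f e\<bar>)"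
        unfolding inc_def by (rule sum.union_disjoint[OF finA(1,2) disj, symmetric])
      finally have bsum: "\<bar>b i\<bar> \<le> (\<Sum>e\<in>inc. \<bar>f e\<bar>)" .
      have incne: "inc \<noteq> {}" using bsum bnz by auto
      have incE: "inc \<subseteq> E" unfolding inc_def A_def B_def by auto
      have Min_in': "Max ((\<lambda>e. \<bar>f e\<bar>) ` inc) \<in> (\<lambda>e. \<bar>f e\<bar>) ` inc"
        using finA(3) incne by (intro Max_in) auto
      then obtain e0 where e0: "e0 \<in> inc" and e0M: "\<bar>f e0\<bar> = Max ((\<lambda>e. \<bar>f e\<bar>) ` inc)"
        by auto
      have e0max: "\<bar>f e\<bar> \<le> \<bar>f e0\<bar>" if "e \<in> inc" for e
        unfolding e0M using finA(3) that by (intro Max_ge) auto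
      define g where "g e = (if fst e = i then snd e else fst e)" for e :: "'a \<times> 'a"
      have ginj: "inj_on g inc"
      proof (rule inj_onI)
        fix x y assume x: "x \<in> inc" and y: "y \<in> inc" and gxy: "g x = g y"
        obtain x1 x2 where xe: "x = (x1,x2)" by force
        obtain y1 y2 where ye: "y = (y1,y2)" by force
        show "x = y" using x y gxy anti noloop unfolding inc_def A_def B_def g_def xe ye
          by (auto split: if_splits)
      qed
      have gsub: "g ` inc \<subseteq> V - {i}"
      proof
        fix y assume "y \<in> g ` inc"
        then obtain x where x: "x \<in> inc" and yx: "y = g x" by auto
        obtain x1 x2 where xe: "x = (x1,x2)" by force
        have "x1 \<in> V" "x2 \<in> V" "x1 \<noteq> x2" using x EV noloop unfolding xe inc_def A_def B_def
          by auto
        then show "y \<in> V - {i}" using x unfolding yx g_def xe inc_def A_def B_def by auto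
      qed
      have "card inc \<le> card (V - {i})"
        using card_inj_on_le[OF ginj gsub] finV by simp
      also have "\<dots> < card V" using finV iV by (metis card_Diff1_less)
      finally have cardlt: "card inc \<le> card V" by simp
      have "(\<Sum>e\<in>inc. \<bar>f e\<bar>) \<le> (\<Sum>e\<in>inc. \<bar>f e0\<bar>)" by (intro sum_mono e0max)
      also have "\<dots> = real (card inc) * \<bar>f e0\<bar>" by simp
      also have "\<dots> \<le> real (card V) * \<bar>f e0\<bar>" using cardlt by (intro mult_right_mono) auto
      finally have "\<bar>b i\<bar> \<le> real (card V) * \<bar>f e0\<bar>" using bsum by linarith
      moreover have cV: "real (card V) > 0" using finV Vne by (simp add: card_gt_0_iff)
      ultimately have q: "\<bar>b i\<bar> / real (card V) \<le> \<bar>f e0\<bar>"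
        by (simp add: divide_le_eq mult.commute)
      have qp: "(\<bar>b i\<bar> / real (card V)) powr p \<le> \<bar>f e0\<bar> powr p"
        using q p0 by (intro powr_mono2) auto
      have e0E: "e0 \<in> E" using e0 incE by auto
      have mn: "neg_inf_norm E r \<le> r e0" and mn0: "neg_inf_norm E r \<ge> 0"
      proof -
        show "neg_inf_norm E r \<le> r e0" unfolding neg_inf_norm_def
          using finE e0E assms(2) by (metis Min_le abs_of_pos finite_imageI image_eqI)
        have "Min ((\<lambda>i. \<bar>r i\<bar>) ` E) \<in> (\<lambda>i. \<bar>r i\<bar>) ` E"
          using finE e0E by (intro Min_in) auto
        then show "neg_inf_norm E r \<ge> 0" unfolding neg_inf_norm_def by auto
      qed
      have "(1 / p) * (inf_norm V b / real (card V)) powr p * neg_inf_norm E r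
            \<le> (1/p) * (\<bar>f e0\<bar> powr p * r e0)"
        unfolding bi mult.assoc using p0 qp mn mn0
        by (intro mult_left_mono mult_mono) auto
      also have "\<dots> = (1/p) * (r e0 * \<bar>f e0\<bar> powr p)" by simp
      also have "\<dots> \<le> (1/p) * (\<Sum>e\<in>E. r e * \<bar>f e\<bar> powr p)"
        using p0 finE e0E assms(2)
        by (intro mult_left_mono member_le_sum) (auto intro: less_imp_le)
      finally show ?thesis unfolding energy_def .
    qed
  qed
qed

end
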